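(* Let $n$ and $M$ be positive integers with $M$ dividing $n$, let $N=n/M$, and let $\lambda>0$. Let $\{X_{c,i}: 1\le c\le N,\ 1\le i\le M\}$ be i.i.d. exponential random variables with rate $\lambda$, and define $$\hat V_c=\sum_{i=1}^{M}X_{c,i},\qquad Y_{III}=\max_{1\le c\le N}\hat V_c .$$ Let $\bar{\bar U}_1,\dots,\bar{\bar U}_M$ be i.i.d. random variables, each distributed as the maximum $X_{N:N}$ of $N=n/M$ i.i.d. exponential random variables with rate $\lambda$, and set $\bar{\bar V}=\sum_{i=1}^M\bar{\bar U}_i$. Then $Y_{III}\le\bar{\bar V}$ in the usual stochastic order, i.e. $\Pr(Y_{III}>t)\le\Pr(\bar{\bar V}>t)$ for every real $t$.
   Context: Model: $n$ nodes in a fixed square area are divided into $N=n/M$ cells of $M$ nodes each. In Phase III of the transmission scheme, cells operate in parallel; within each cell, $M$ received packets are relayed one at a time to their intended recipients in the cell, each intra-cell transmission delay being i.i.d. exponential with rate $\lambda$. Thus $\hat V_c$ is the time for cell $c$ to finish Phase III and $Y_{III}$ (the duration of Phase III) is the time until the slowest cell finishes. For random variables $X_1,\dots,X_N$, $X_{k:N}$ denotes the $k$-th smallest. *)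

theory Defs
  imports "HOL-Probability.Probability"
begin

definition max_exp_law :: "nat \<Rightarrow> real \<Rightarrow> real measure" where
  "max_exp_law N l =
     distr (PiM {1..N} (\<lambda>_. density lborel (exponential_density l))) borel
       (\<lambda>x. Max (x ` {1..N}))"

end

theory Submission
  imports Defs
begin

theorem lemma2:
  fixes P :: "'a measure" and R :: "'b measure"
    and n m N :: nat and l :: real
    and X :: "nat \<Rightarrow> nat \<Rightarrow> 'a \<Rightarrow> real"
    and U :: "nat \<Rightarrow> 'b \<Rightarrow> real"
  assumes "prob_space P" and "prob_space R"
    and "0 < n" and "0 < m" and "m dvd n" and "N = n div m"
    and "0 < l"
    and "prob_space.indep_vars P (\<lambda>_. borel) (\<lambda>(c, i). X c i) ({1..N} \<times> {1..m})"
    and "\<And>c i. c \<in> {1..N} \<Longrightarrow> i \<in> {1..m} \<Longrightarrow>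
           distributed P lborel (X c i) (exponential_density l)"
    and "prob_space.indep_vars R (\<lambda>_. borel) U {1..m}"
    and "\<And>i. i \<in> {1..m} \<Longrightarrow> distr R borel (U i) = max_exp_law N l"
  shows "\<forall>t::real.
           measure P {\<omega> \<in> space P. (MAX c\<in>{1..N}. (\<Sum>i=1..m. X c i \<omega>)) > t}
         \<le> measure R {\<omega> \<in> space R. (\<Sum>i=1..m. U i \<omega>) > t}"
proof
  fix t :: real
  interpret P: prob_space P by fact
  interpret R: prob_space R by fact
  define I where "I = {1..N}"
  define J where "J = {1..m}"
  define E where "E = density lborel (\<lambda>x. ennreal (exponential_density l x))"
  define Y where "Y = (\<lambda>(c, i). X c i)"
  define W where "W = (\<lambda>j \<omega>. MAX c\<in>I. X c j \<omega>)"
  have fI: "finite I" and fJ: "finite J" by (auto simp: I_def J_def)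
  have "N \<ge> 1" using assms(3-6)
    by (metis One_nat_def dvd_div_eq_0_iff div_greater_zero_iff dvd_imp_le le_eq_less_or_eq less_one not_less)
  then have neI: "I \<noteq> {}" by (auto simp: I_def)
  have neJ: "J \<noteq> {}" using assms(4) by (auto simp: J_def)
  have Eprob: "prob_space E" unfolding E_def using assms(7) by (rule prob_space_exponential_density)
  have rvX: "X c i \<in> borel_measurable P" if "c \<in> I" "i \<in> J" for c i
    using distributed_measurable[OF assms(9)] that by (auto simp: I_def J_def)
  have distX: "distr P borel (X c i) = E" if "c \<in> I" "i \<in> J" for c i
  proof -
    have "distr P borel (X c i) = distr P lborel (X c i)" by (rule distr_cong) auto
    also have "\<dots> = E" unfolding E_def
      using distributed_distr_eq_density[OF assms(9)] that by (auto simp: I_def J_def)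
    finally show ?thesis .
  qed

  have Yeq: "\<And>c i. Y (c, i) = X c i" by (simp add: Y_def)
  have indY: "P.indep_vars (\<lambda>_. borel) Y (I \<times> J)"
    using assms(8) by (simp add: Y_def I_def J_def)
  have rvY: "Y p \<in> borel_measurable P" if "p \<in> I \<times> J" for p
    using that rvX by (auto simp: Y_def)
  have joint: "distr P (PiM (I \<times> J) (\<lambda>_. borel)) (\<lambda>\<omega>. \<lambda>p\<in>I \<times> J. Y p \<omega>) = PiM (I \<times> J) (\<lambda>_. E)"
  proof -
    have "distr P (PiM (I \<times> J) (\<lambda>_. borel)) (\<lambda>\<omega>. \<lambda>p\<in>I \<times> J. Y p \<omega>) = PiM (I \<times> J) (\<lambda>p. distr P borel (Y p))"
      using P.indep_vars_iff_distr_eq_PiM'[where I="I \<times> J" and M'="\<lambda>_. borel" and X=Y] indY rvY neI neJ by auto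
    also have "\<dots> = PiM (I \<times> J) (\<lambda>_. E)"
      by (rule PiM_cong) (auto simp: Y_def distX)
    finally show ?thesis .
  qed
  have rvW: "W j \<in> borel_measurable P" if "j \<in> J" for j
    unfolding W_def using rvX that fI by (intro borel_measurable_Max) auto
  have distW: "distr P borel (W j) = max_exp_law N l" if j: "j \<in> J" for j
  proof -
    define h where "h = (\<lambda>x::nat\<times>nat \<Rightarrow> real. MAX c\<in>I. x (c, j))"
    have hm: "h \<in> borel_measurable (PiM (I \<times> J) (\<lambda>_. borel))"
      unfolding h_def using fI j by (intro borel_measurable_Max) auto
    have jm: "(\<lambda>\<omega>. \<lambda>p\<in>I \<times> J. Y p \<omega>) \<in> measurable P (PiM (I \<times> J) (\<lambda>_. borel))"
      using rvY by (intro measurable_restrict) auto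
    have "distr P borel (W j) = distr P borel (h \<circ> (\<lambda>\<omega>. \<lambda>p\<in>I \<times> J. Y p \<omega>))"
      by (rule distr_cong) (auto simp: W_def h_def j Y_def intro!: arg_cong[where f=Max])
    also have "\<dots> = distr (distr P (PiM (I \<times> J) (\<lambda>_. borel)) (\<lambda>\<omega>. \<lambda>p\<in>I \<times> J. Y p \<omega>)) borel h"
      using hm jm by (simp add: distr_distr)
    also have "\<dots> = distr (PiM (I \<times> J) (\<lambda>_. E)) borel h" by (simp add: joint)
    also have "\<dots> = distr (PiM (I \<times> J) (\<lambda>_. E)) borel ((\<lambda>x. Max (x ` I)) \<circ> (\<lambda>\<omega>. \<lambda>c\<in>I. \<omega> (c, j)))"
      by (rule distr_cong) (auto simp: h_def intro!: arg_cong[where f=Max])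
    also have "\<dots> = distr (distr (PiM (I \<times> J) (\<lambda>_. E)) (PiM I (\<lambda>_. E)) (\<lambda>\<omega>. \<lambda>c\<in>I. \<omega> (c, j))) borel (\<lambda>x. Max (x ` I))"
    proof (rule distr_distr[symmetric])
      show "(\<lambda>x. Max (x ` I)) \<in> borel_measurable (PiM I (\<lambda>_. E))"
        using fI by (intro borel_measurable_Max) (auto simp: E_def)
      show "(\<lambda>\<omega>. \<lambda>c\<in>I. \<omega> (c, j)) \<in> measurable (PiM (I \<times> J) (\<lambda>_. E)) (PiM I (\<lambda>_. E))"
        using j by (intro measurable_restrict) auto
    qed
    also have "distr (PiM (I \<times> J) (\<lambda>_. E)) (PiM I (\<lambda>_. E)) (\<lambda>\<omega>. \<lambda>c\<in>I. \<omega> (c, j)) = PiM I (\<lambda>_. E)"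
      using distr_PiM_reindex[of "I \<times> J" "\<lambda>_. E" "\<lambda>c. (c, j)" I] Eprob j
      by (auto simp: inj_on_def)
    finally show ?thesis by (simp add: max_exp_law_def E_def I_def)
  qed
  have indW: "P.indep_vars (\<lambda>_. borel) W J"
  proof -
    have r: "P.indep_vars (\<lambda>j. PiM (I \<times> {j}) (\<lambda>_. borel)) (\<lambda>j \<omega>. restrict (\<lambda>p. Y p \<omega>) (I \<times> {j})) J"
      by (rule P.indep_vars_restrict[OF indY]) (auto simp: disjoint_family_on_def)
    have "P.indep_vars (\<lambda>_. borel) (\<lambda>j \<omega>. (\<lambda>x. MAX c\<in>I. x (c, j)) (restrict (\<lambda>p. Y p \<omega>) (I \<times> {j}))) J"
      by (rule P.indep_vars_compose2[OF r]) (use fI in \<open>auto intro!: borel_measurable_Max\<close>)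
    then show ?thesis
      by (rule P.indep_vars_cong[THEN iffD1, rotated -1]) (auto simp: W_def Y_def intro!: ext arg_cong[where f=Max])
  qed
  have lawW: "distr P (PiM J (\<lambda>_. borel)) (\<lambda>\<omega>. \<lambda>j\<in>J. W j \<omega>) = PiM J (\<lambda>_. max_exp_law N l)"
  proof -
    have "distr P (PiM J (\<lambda>_. borel)) (\<lambda>\<omega>. \<lambda>j\<in>J. W j \<omega>) = PiM J (\<lambda>j. distr P borel (W j))"
      using P.indep_vars_iff_distr_eq_PiM'[where I=J and M'="\<lambda>_. borel" and X=W] indW rvW neJ by auto
    also have "\<dots> = PiM J (\<lambda>_. max_exp_law N l)"
      by (rule PiM_cong) (auto simp: distW)
    finally show ?thesis .
  qed
  have indU: "R.indep_vars (\<lambda>_. borel) U J" using assms(10) by (simp add: J_def)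
  have rvU: "U j \<in> borel_measurable R" if "j \<in> J" for j
    using indU that by (auto simp: R.indep_vars_def)
  have lawU: "distr R (PiM J (\<lambda>_. borel)) (\<lambda>\<omega>. \<lambda>j\<in>J. U j \<omega>) = PiM J (\<lambda>_. max_exp_law N l)"
  proof -
    have "distr R (PiM J (\<lambda>_. borel)) (\<lambda>\<omega>. \<lambda>j\<in>J. U j \<omega>) = PiM J (\<lambda>j. distr R borel (U j))"
      using R.indep_vars_iff_distr_eq_PiM'[where I=J and M'="\<lambda>_. borel" and X=U] indU rvU neJ by auto
    also have "\<dots> = PiM J (\<lambda>_. max_exp_law N l)"
      by (rule PiM_cong) (auto simp: assms(11) J_def)
    finally show ?thesis .
  qed
  define S where "S = {x \<in> space (PiM J (\<lambda>_. borel::real measure)). t < (\<Sum>j\<in>J. x j)}"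
  have Ssets: "S \<in> sets (PiM J (\<lambda>_. borel::real measure))"
    unfolding S_def using fJ by measurable
  have mW: "(\<lambda>\<omega>. \<lambda>j\<in>J. W j \<omega>) \<in> measurable P (PiM J (\<lambda>_. borel))"
    using rvW by (intro measurable_restrict) auto
  have mU: "(\<lambda>\<omega>. \<lambda>j\<in>J. U j \<omega>) \<in> measurable R (PiM J (\<lambda>_. borel))"
    using rvU by (intro measurable_restrict) auto
  have eqW: "measure P {\<omega> \<in> space P. t < (\<Sum>j\<in>J. W j \<omega>)} = measure (PiM J (\<lambda>_. max_exp_law N l)) S"
  proof -
    have "measure (PiM J (\<lambda>_. max_exp_law N l)) S = measure P ((\<lambda>\<omega>. \<lambda>j\<in>J. W j \<omega>) -` S \<inter> space P)"
      unfolding lawW[symmetric] using mW Ssets by (rule measure_distr)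
    also have "(\<lambda>\<omega>. \<lambda>j\<in>J. W j \<omega>) -` S \<inter> space P = {\<omega> \<in> space P. t < (\<Sum>j\<in>J. W j \<omega>)}"
      using measurable_space[OF mW] by (auto simp: S_def)
    finally show ?thesis by simp
  qed
  have eqU: "measure R {\<omega> \<in> space R. t < (\<Sum>j\<in>J. U j \<omega>)} = measure (PiM J (\<lambda>_. max_exp_law N l)) S"
  proof -
    have "measure (PiM J (\<lambda>_. max_exp_law N l)) S = measure R ((\<lambda>\<omega>. \<lambda>j\<in>J. U j \<omega>) -` S \<inter> space R)"
      unfolding lawU[symmetric] using mU Ssets by (rule measure_distr)
    also have "(\<lambda>\<omega>. \<lambda>j\<in>J. U j \<omega>) -` S \<inter> space R = {\<omega> \<in> space R. t < (\<Sum>j\<in>J. U j \<omega>)}"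
      using measurable_space[OF mU] by (auto simp: S_def)
    finally show ?thesis by simp
  qed
  have pw: "(MAX c\<in>I. (\<Sum>i\<in>J. X c i \<omega>)) \<le> (\<Sum>j\<in>J. W j \<omega>)" for \<omega>
  proof -
    have "(\<Sum>i\<in>J. X c i \<omega>) \<le> (\<Sum>j\<in>J. W j \<omega>)" if "c \<in> I" for c
      unfolding W_def using that fI by (intro sum_mono) auto
    then show ?thesis using fI neI by (simp add: Max_le_iff)
  qed
  have "measure P {\<omega> \<in> space P. t < (MAX c\<in>I. (\<Sum>i\<in>J. X c i \<omega>))} \<le> measure P {\<omega> \<in> space P. t < (\<Sum>j\<in>J. W j \<omega>)}"
  proof (rule P.finite_measure_mono)
    show "{\<omega> \<in> space P. t < (MAX c\<in>I. (\<Sum>i\<in>J. X c i \<omega>))} \<subseteq> {\<omega> \<in> space P. t < (\<Sum>j\<in>J. W j \<omega>)}"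
      using pw order_less_le_trans by blast
    have "(\<lambda>\<omega>. \<Sum>j\<in>J. W j \<omega>) \<in> borel_measurable P" using rvW by auto
    then show "{\<omega> \<in> space P. t < (\<Sum>j\<in>J. W j \<omega>)} \<in> sets P" by measurable
  qed
  then show "measure P {\<omega> \<in> space P. (MAX c\<in>{1..N}. (\<Sum>i=1..m. X c i \<omega>)) > t}
         \<le> measure R {\<omega> \<in> space R. (\<Sum>i=1..m. U i \<omega>) > t}"
    using eqW eqU by (simp add: I_def J_def)
qed

end
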